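(* For every $N\in\mathbb{N}$, with $\pi_N$ the law of the number of fixed points of a uniformly random permutation of $\{1,\dots,N\}$ and $\mathcal{P}$ the Poisson law of parameter $1$, $$\|\pi_N-\mathcal{P}\|_{\mathrm{tv}}\le\frac{2^{N+1}}{(N+1)!}.$$
   Context: $\|\mu-\mu'\|_{\mathrm{tv}}=\sup_{A\subset\mathbb{Z}_+}|\mu(A)-\mu'(A)|=\sum_n(\mu(n)-\mu'(n))_+$. *)

theory Defs
  imports "HOL-Probability.Probability"
begin

definition fixpt_law :: "nat \<Rightarrow> nat pmf" where
  "fixpt_law N = map_pmf (\<lambda>\<sigma>. card {i \<in> {1..N}. \<sigma> i = i})
                   (pmf_of_set {\<sigma>. \<sigma> permutes {1..N}})"

definition tv_dist :: "nat pmf \<Rightarrow> nat pmf \<Rightarrow> real" where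
  "tv_dist \<mu> \<mu>' = (\<Sum>n. max 0 (pmf \<mu> n - pmf \<mu>' n))"

end

theory Submission imports Defs begin


definition ea :: "nat \<Rightarrow> real" where "ea m = (\<Sum>j\<le>m. (-1)^j / fact j)"

lemma conv0: "(\<Sum>i\<le>s. ((-1::real)^i / fact i) * (1 / fact (s - i))) = (if s = 0 then 1 else 0)"
proof -
  have "(\<Sum>i\<le>s. ((-1::real)^i / fact i) * (1 / fact (s - i))) = (\<Sum>i\<le>s. of_nat (s choose i) * (-1)^i * 1^(s-i)) / fact s"
    by (simp add: sum_divide_distrib binomial_fact field_simps)
  also have "\<dots> = (-1 + 1)^s / fact s" using binomial_ring[of "-1::real" 1 s] by simp
  finally show ?thesis by simp
qed

lemma J1: "(\<Sum>k\<le>n. ea k / fact (n - k)) = 1"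
proof -
  let ?g = "\<lambda>i j. ((-1::real)^i / fact i) * (1 / fact j)"
  have "(\<Sum>(i,j)\<in>{(i,j). i+j \<le> n}. ?g i j) = (\<Sum>s\<le>n. \<Sum>i\<le>s. ?g i (s - i))"
    by (rule sum.triangle_reindex_eq)
  also have "\<dots> = (\<Sum>s\<le>n. if s = 0 then 1 else 0)"
    by (intro sum.cong refl) (rule conv0)
  also have "\<dots> = 1" by simp
  finally have A: "(\<Sum>(i,j)\<in>{(i,j). i+j \<le> n}. ?g i j) = 1" .
  have "(\<Sum>(i,j)\<in>{(i,j). i+j \<le> n}. ?g i j) = (\<Sum>j\<le>n. \<Sum>i\<le>n-j. ?g i j)"
  proof -
    have "(\<Sum>j\<le>n. \<Sum>i\<le>n-j. ?g i j) = (\<Sum>(j,i)\<in>Sigma {..n} (\<lambda>j. {..n-j}). ?g i j)"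
      by (rule sum.Sigma) auto
    also have "\<dots> = (\<Sum>(i,j)\<in>{(i,j). i+j \<le> n}. ?g i j)"
      by (rule sum.reindex_bij_witness[where i="\<lambda>(i,j). (j,i)" and j="\<lambda>(j,i). (i,j)"]) auto
    finally show ?thesis by simp
  qed
  also have "\<dots> = (\<Sum>j\<le>n. ea (n - j) / fact j)"
    by (simp add: ea_def sum_distrib_left sum_divide_distrib)
  also have "\<dots> = (\<Sum>k\<le>n. ea k / fact (n - k))"
    using sum.atLeastAtMost_rev[of "\<lambda>j. ea (n - j) / fact j" 0 n] by (simp add: atLeast0AtMost)
  finally show ?thesis using A by simp
qed


lemma binom_id: "(\<Sum>k\<le>n. real (n choose k) * (fact k * ea k)) = fact n"
proof -
  have "(\<Sum>k\<le>n. real (n choose k) * (fact k * ea k)) = (\<Sum>k\<le>n. fact n * (ea k / fact (n - k)))"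
    by (intro sum.cong refl) (simp add: binomial_fact field_simps)
  also have "\<dots> = fact n * (\<Sum>k\<le>n. ea k / fact (n - k))" by (rule sum_distrib_left[symmetric])
  also have "\<dots> = fact n" using J1[of n] by simp
  finally show ?thesis .
qed


definition der :: "'a set \<Rightarrow> ('a \<Rightarrow> 'a) set" where
  "der A = {\<sigma>. \<sigma> permutes A \<and> (\<forall>x\<in>A. \<sigma> x \<noteq> x)}"

lemma der_disj: "\<sigma> \<in> der B \<Longrightarrow> B \<subseteq> A \<Longrightarrow> B = {x\<in>A. \<sigma> x \<noteq> x}"
  unfolding der_def using permutes_not_in[of \<sigma> B] by blast

lemma perm_in_der: "\<sigma> permutes A \<Longrightarrow> \<sigma> \<in> der {x\<in>A. \<sigma> x \<noteq> x}"
  unfolding der_def permutes_def by auto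

lemma der_finite: "finite A \<Longrightarrow> finite (der A)"
  unfolding der_def by (rule finite_subset[OF _ finite_permutations]) auto

lemma perm_union: "{\<sigma>. \<sigma> permutes A} = (\<Union>B\<in>Pow A. der B)"
proof
  show "{\<sigma>. \<sigma> permutes A} \<subseteq> (\<Union>B\<in>Pow A. der B)"
  proof
    fix \<sigma> assume "\<sigma> \<in> {\<sigma>. \<sigma> permutes A}"
    then have "\<sigma> \<in> der {x\<in>A. \<sigma> x \<noteq> x}" using perm_in_der by simp
    then show "\<sigma> \<in> (\<Union>B\<in>Pow A. der B)" by auto
  qed
  show "(\<Union>B\<in>Pow A. der B) \<subseteq> {\<sigma>. \<sigma> permutes A}"
    unfolding der_def using permutes_subset by auto
qed

lemma perm_split: "finite A \<Longrightarrow> fact (card A) = (\<Sum>B\<in>Pow A. card (der B))"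
proof -
  assume f: "finite A"
  have "fact (card A) = card {\<sigma>. \<sigma> permutes A}" using card_permutations[OF refl f] by simp
  also have "\<dots> = card (\<Union>B\<in>Pow A. der B)" by (simp only: perm_union)
  also have "\<dots> = (\<Sum>B\<in>Pow A. card (der B))"
  proof (rule card_UN_disjoint)
    show "finite (Pow A)" using f by simp
    show "\<forall>i\<in>Pow A. finite (der i)" using f by (auto intro: der_finite finite_subset)
    show "\<forall>i\<in>Pow A. \<forall>j\<in>Pow A. i \<noteq> j \<longrightarrow> der i \<inter> der j = {}"
    proof (intro ballI impI)
      fix i j assume "i \<in> Pow A" "j \<in> Pow A" "i \<noteq> j"
      then show "der i \<inter> der j = {}" using der_disj[of _ i A] der_disj[of _ j A] by blast
    qed
  qed
  finally show ?thesis .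
qed

lemma sum_by_card: "finite A \<Longrightarrow> (\<Sum>B\<in>Pow A. h (card B)) = (\<Sum>k\<le>card A. real (card A choose k) * h k)"
proof -
  assume f: "finite A"
  have "(\<Sum>B\<in>Pow A. h (card B)) = (\<Sum>k\<in>{..card A}. \<Sum>B\<in>{B\<in>Pow A. card B = k}. h (card B))"
  proof (rule sum.group[symmetric])
    show "finite (Pow A)" using f by simp
    show "finite {..card A}" by simp
    show "card ` Pow A \<subseteq> {..card A}" using f card_mono by fastforce
  qed
  also have "\<dots> = (\<Sum>k\<le>card A. real (card A choose k) * h k)"
  proof (intro sum.cong refl)
    fix k
    have "(\<Sum>B\<in>{B\<in>Pow A. card B = k}. h (card B)) = (\<Sum>B\<in>{B\<in>Pow A. card B = k}. h k)"
      by (intro sum.cong refl) auto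
    also have "\<dots> = real (card {B\<in>Pow A. card B = k}) * h k" by simp
    also have "{B\<in>Pow A. card B = k} = {B. B \<subseteq> A \<and> card B = k}" by auto
    also have "real (card {B. B \<subseteq> A \<and> card B = k}) * h k = real (card A choose k) * h k" using n_subsets[OF f] by simp
    finally show "(\<Sum>B\<in>{B\<in>Pow A. card B = k}. h (card B)) = real (card A choose k) * h k" by simp
  qed
  finally show ?thesis .
qed

lemma der_card: "finite A \<Longrightarrow> real (card (der A)) = fact (card A) * ea (card A)"
proof (induction "card A" arbitrary: A rule: less_induct)
  case less
  have IH: "\<And>B. B \<in> Pow A - {A} \<Longrightarrow> real (card (der B)) = fact (card B) * ea (card B)"
  proof -
    fix B assume "B \<in> Pow A - {A}"
    then have "B \<subset> A" by auto
    then show "real (card (der B)) = fact (card B) * ea (card B)"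
      using less.hyps[of B] psubset_card_mono[OF less.prems] finite_subset less.prems by auto
  qed
  have "fact (card A) = (\<Sum>B\<in>Pow A. real (card (der B)))"
    using perm_split[OF less.prems] by (metis of_nat_fact of_nat_sum)
  also have "\<dots> = real (card (der A)) + (\<Sum>B\<in>Pow A - {A}. real (card (der B)))"
    using less.prems by (subst sum.remove[of _ A]) auto
  also have "(\<Sum>B\<in>Pow A - {A}. real (card (der B))) = (\<Sum>B\<in>Pow A - {A}. fact (card B) * ea (card B))"
    using IH by (intro sum.cong refl) auto
  also have "\<dots> = (\<Sum>B\<in>Pow A. fact (card B) * ea (card B)) - fact (card A) * ea (card A)"
    using less.prems by (subst sum.remove[of _ A]) auto
  also have "(\<Sum>B\<in>Pow A. fact (card B) * ea (card B)) = fact (card A)"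
    using sum_by_card[OF less.prems, of "\<lambda>k. fact k * ea k"] binom_id by simp
  finally show ?case by simp
qed

lemma ea_bound: "ea m - exp (-1) \<le> 1 / fact (Suc m)"
proof -
  define a :: "nat \<Rightarrow> real" where "a n = 1 / fact n" for n
  have az: "a \<longlonglongrightarrow> 0"
    unfolding a_def using summable_LIMSEQ_zero[OF summable_exp[of "1::real"]] by (simp add: divide_inverse)
  have ap: "\<And>n. 0 \<le> a n" unfolding a_def by simp
  have am: "\<And>n. a (Suc n) \<le> a n" unfolding a_def
    by (simp add: divide_inverse fact_mono le_imp_inverse_le inverse_le_1_iff)
  note L = summable_Leibniz'[OF az ap am]
  have "(\<lambda>n. (-1) ^ n *\<^sub>R inverse (fact n)) sums exp (-1::real)"
    using exp_converges[of "-1::real"] by (simp add: divide_inverse mult.commute)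
  then have E: "exp (-1) = (\<Sum>i. (-1)^i * a i)"
    unfolding a_def by (simp add: sums_iff divide_inverse)
  have EA: "ea m = (\<Sum>i<Suc m. (-1)^i * a i)"
    unfolding ea_def a_def by (simp add: lessThan_Suc_atMost)
  show ?thesis
  proof (cases "even (Suc m)")
    case True
    then obtain n where n: "Suc m = 2 * n" by blast
    have "ea m \<le> exp (-1)" using L(2)[of n] E EA n by simp
    then show ?thesis by (smt (verit) divide_nonneg_nonneg fact_ge_zero)
  next
    case False
    then obtain n where n: "Suc m = 2 * n + 1" using oddE by blast
    have "(\<Sum>i<2*(n+1). (-1)^i * a i) \<le> exp (-1)" using L(2)[of "n+1"] E by simp
    moreover have "(\<Sum>i<2*(n+1). (-1)^i * a i) = ea m + (-1)^(2*n+1) * a (2*n+1)"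
      using EA n by simp
    ultimately show ?thesis using n unfolding a_def by simp
  qed
qed

lemma fix_set: "finite S \<Longrightarrow> {\<sigma>. \<sigma> permutes S \<and> card {i\<in>S. \<sigma> i = i} = k}
   = (\<Union>T\<in>{T. T \<subseteq> S \<and> card T = k}. der (S - T))"
proof (intro equalityI subsetI)
  fix \<sigma> assume "\<sigma> \<in> {\<sigma>. \<sigma> permutes S \<and> card {i\<in>S. \<sigma> i = i} = k}"
  then have p: "\<sigma> permutes S" and c: "card {i\<in>S. \<sigma> i = i} = k" by auto
  have e: "{x\<in>S. \<sigma> x \<noteq> x} = S - {i\<in>S. \<sigma> i = i}" by blast
  have "\<sigma> \<in> der (S - {i\<in>S. \<sigma> i = i})" using perm_in_der[OF p] unfolding e .
  moreover have "{i\<in>S. \<sigma> i = i} \<in> {T. T \<subseteq> S \<and> card T = k}" using c by blast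
  ultimately show "\<sigma> \<in> (\<Union>T\<in>{T. T \<subseteq> S \<and> card T = k}. der (S - T))" by blast
next
  fix \<sigma> assume "\<sigma> \<in> (\<Union>T\<in>{T. T \<subseteq> S \<and> card T = k}. der (S - T))"
  then obtain T where T: "T \<subseteq> S" "card T = k" and d: "\<sigma> \<in> der (S - T)" by blast
  have "S - T = {x\<in>S. \<sigma> x \<noteq> x}" using der_disj[OF d, of S] by blast
  then have "{i\<in>S. \<sigma> i = i} = T" using T by blast
  moreover have "\<sigma> permutes S" using d permutes_subset[of \<sigma> "S - T" S] unfolding der_def by blast
  ultimately show "\<sigma> \<in> {\<sigma>. \<sigma> permutes S \<and> card {i\<in>S. \<sigma> i = i} = k}" using T by simp
qed

lemma fix_count: "finite S \<Longrightarrow> real (card {\<sigma>. \<sigma> permutes S \<and> card {i\<in>S. \<sigma> i = i} = k})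
   = real (card S choose k) * (fact (card S - k) * ea (card S - k))"
proof -
  assume f: "finite S"
  have "card {\<sigma>. \<sigma> permutes S \<and> card {i\<in>S. \<sigma> i = i} = k}
     = card (\<Union>T\<in>{T. T \<subseteq> S \<and> card T = k}. der (S - T))" using fix_set[OF f] by simp
  also have "\<dots> = (\<Sum>T\<in>{T. T \<subseteq> S \<and> card T = k}. card (der (S - T)))"
  proof (rule card_UN_disjoint)
    show "finite {T. T \<subseteq> S \<and> card T = k}" using f by simp
    show "\<forall>i\<in>{T. T \<subseteq> S \<and> card T = k}. finite (der (S - i))" using f by (auto intro: der_finite)
    show "\<forall>i\<in>{T. T \<subseteq> S \<and> card T = k}. \<forall>j\<in>{T. T \<subseteq> S \<and> card T = k}. i \<noteq> j \<longrightarrow> der (S - i) \<inter> der (S - j) = {}"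
    proof (intro ballI impI)
      fix i j assume "i \<in> {T. T \<subseteq> S \<and> card T = k}" "j \<in> {T. T \<subseteq> S \<and> card T = k}" "i \<noteq> j"
      then have "S - i \<noteq> S - j" by auto
      then show "der (S - i) \<inter> der (S - j) = {}" using der_disj[of _ "S - i" S] der_disj[of _ "S - j" S] by blast
    qed
  qed
  finally have "real (card {\<sigma>. \<sigma> permutes S \<and> card {i\<in>S. \<sigma> i = i} = k})
     = (\<Sum>T\<in>{T. T \<subseteq> S \<and> card T = k}. real (card (der (S - T))))" by simp
  also have "\<dots> = (\<Sum>T\<in>{T. T \<subseteq> S \<and> card T = k}. fact (card S - k) * ea (card S - k))"
  proof (intro sum.cong refl)
    fix T assume "T \<in> {T. T \<subseteq> S \<and> card T = k}"
    then have "card (S - T) = card S - k" using f by (auto simp: card_Diff_subset finite_subset)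
    then show "real (card (der (S - T))) = fact (card S - k) * ea (card S - k)"
      using der_card[of "S - T"] f by simp
  qed
  also have "\<dots> = real (card S choose k) * (fact (card S - k) * ea (card S - k))"
    using n_subsets[OF f, of k] by simp
  finally show ?thesis .
qed

lemma pmf_fix: "pmf (fixpt_law N) k = (if k \<le> N then ea (N - k) / fact k else 0)"
proof -
  let ?P = "{\<sigma>. \<sigma> permutes {1..N}}"
  have fP: "finite ?P" by (simp add: finite_permutations)
  have nP: "?P \<noteq> {}" using permutes_id by blast
  have cP: "card ?P = fact N" using card_permutations[of "{1..N}" N] by simp
  have "pmf (fixpt_law N) k = measure (pmf_of_set ?P) ((\<lambda>\<sigma>. card {i \<in> {1..N}. \<sigma> i = i}) -` {k})"
    unfolding fixpt_law_def by (simp add: pmf_map)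
  also have "\<dots> = real (card (?P \<inter> (\<lambda>\<sigma>. card {i \<in> {1..N}. \<sigma> i = i}) -` {k})) / real (card ?P)"
    using measure_pmf_of_set[OF nP fP] by simp
  also have "?P \<inter> (\<lambda>\<sigma>. card {i \<in> {1..N}. \<sigma> i = i}) -` {k} = {\<sigma>. \<sigma> permutes {1..N} \<and> card {i\<in>{1..N}. \<sigma> i = i} = k}"
    by auto
  also have "real (card {\<sigma>. \<sigma> permutes {1..N} \<and> card {i\<in>{1..N}. \<sigma> i = i} = k})
      = real (N choose k) * (fact (N - k) * ea (N - k))"
    using fix_count[of "{1..N}" k] by simp
  finally have X: "pmf (fixpt_law N) k = real (N choose k) * (fact (N - k) * ea (N - k)) / fact N"
    using cP by simp
  show ?thesis
  proof (cases "k \<le> N")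
    case True
    then show ?thesis using X by (simp add: binomial_fact field_simps)
  next
    case False
    then show ?thesis using X by simp
  qed
qed

theorem mainTheorem15:
  fixes N :: nat
  shows "tv_dist (fixpt_law N) (poisson_pmf 1) \<le> 2 ^ (N + 1) / fact (N + 1)"
proof -
  define g where "g n = max 0 (pmf (fixpt_law N) n - pmf (poisson_pmf 1) n)" for n
  have g0: "\<And>n. n \<notin> {..N} \<Longrightarrow> g n = 0" unfolding g_def by (simp add: pmf_fix)
  have gb: "\<And>k. k \<le> N \<Longrightarrow> g k \<le> 1 / (fact k * fact (N + 1 - k))"
  proof -
    fix k assume k: "k \<le> N"
    have "pmf (fixpt_law N) k - pmf (poisson_pmf 1) k = (ea (N - k) - exp (-1)) / fact k"
      using k by (simp add: pmf_fix field_simps)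
    also have "\<dots> \<le> (1 / fact (Suc (N - k))) / fact k"
      by (rule divide_right_mono[OF ea_bound]) simp
    also have "Suc (N - k) = N + 1 - k" using k by simp
    finally show "g k \<le> 1 / (fact k * fact (N + 1 - k))" unfolding g_def by (simp add: mult.commute)
  qed
  have "tv_dist (fixpt_law N) (poisson_pmf 1) = (\<Sum>n\<le>N. g n)"
    unfolding tv_dist_def g_def[symmetric] by (rule suminf_finite) (use g0 in auto)
  also have "\<dots> \<le> (\<Sum>k\<le>N. 1 / (fact k * fact (N + 1 - k)))"
    by (rule sum_mono) (use gb in auto)
  also have "\<dots> \<le> (\<Sum>k\<le>N+1. 1 / (fact k * fact (N + 1 - k)))"
    by (rule sum_mono2) auto
  also have "\<dots> = (\<Sum>k\<le>N+1. real (N + 1 choose k)) / fact (N + 1)"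
    unfolding sum_divide_distrib
  proof (intro sum.cong refl)
    fix k assume "k \<in> {..N+1}"
    then have "k \<le> N + 1" by simp
    then show "1 / (fact k * fact (N + 1 - k)) = real (N + 1 choose k) / fact (N + 1)"
      by (simp only: binomial_fact) simp
  qed
  also have "\<dots> = 2 ^ (N + 1) / fact (N + 1)"
    using choose_row_sum[of "N+1"] by (metis of_nat_numeral of_nat_power of_nat_sum)
  finally show ?thesis .
qed

end
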